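(* Let $\mathcal{F}\subseteq\mathcal{P}(\omega)$ be a free filter, let $h\colon Q\to Q$ be a homeomorphism of $Q=[-1,1]^\omega$, and let $D\subseteq(-1,1)^\omega$ be countable and dense in $Q$. Assume there is $z\in C_\mathcal{F}$ such that for every $d\in D$ and $n\in\omega$, $|(d-h(d))(n)|\le|z(n)|$. Then $h[K_\mathcal{F}]=K_\mathcal{F}$.
   Context: A filter on $\omega$ is free if it contains all cofinite sets. $Q=[-1,1]^\omega$ has the product topology, $Q^\circ=(-1,1)^\omega$. $K_\mathcal{F}=\{f\in Q:\forall m\in\omega\ \{n\in\omega:|f(n)|<2^{-m}\}\in\mathcal{F}\}$ and $C_\mathcal{F}=K_\mathcal{F}\cap Q^\circ$. Differences are coordinatewise. *)

theory Defs
  imports "HOL-Analysis.Analysis"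
begin

text \<open>The type nat \<Rightarrow> real carries the product topology (HOL-Analysis.Function_Topology).\<close>

definition Qcube :: "(nat \<Rightarrow> real) set" where
  "Qcube = {f. \<forall>n. \<bar>f n\<bar> \<le> 1}"

definition Qopen :: "(nat \<Rightarrow> real) set" where
  "Qopen = {f. \<forall>n. \<bar>f n\<bar> < 1}"

definition is_filter_on_nat :: "nat set set \<Rightarrow> bool" where
  "is_filter_on_nat F \<longleftrightarrow> UNIV \<in> F \<and> {} \<notin> F \<and>
     (\<forall>A B. A \<in> F \<longrightarrow> B \<in> F \<longrightarrow> A \<inter> B \<in> F) \<and>
     (\<forall>A B. A \<in> F \<longrightarrow> A \<subseteq> B \<longrightarrow> B \<in> F)"

definition free_filter :: "nat set set \<Rightarrow> bool" where
  "free_filter F \<longleftrightarrow> is_filter_on_nat F \<and> (\<forall>A. finite (UNIV - A) \<longrightarrow> A \<in> F)"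

definition K_F :: "nat set set \<Rightarrow> (nat \<Rightarrow> real) set" where
  "K_F F = {f \<in> Qcube. \<forall>m::nat. {n. \<bar>f n\<bar> < (1/2) ^ m} \<in> F}"

definition C_F :: "nat set set \<Rightarrow> (nat \<Rightarrow> real) set" where
  "C_F F = K_F F \<inter> Qopen"

end

theory Submission
  imports Defs
begin

lemma closed_Qcube: "closed Qcube"
proof -
  have e: "Qcube = (\<Inter>n. {f::nat\<Rightarrow>real. \<bar>f n\<bar> \<le> 1})" by (auto simp: Qcube_def)
  have c: "closed {f::nat\<Rightarrow>real. \<bar>f n\<bar> \<le> 1}" for n
    by (intro closed_Collect_le continuous_on_rabs continuous_on_const continuous_on_product_coordinates)
  show ?thesis unfolding e by (rule closed_INT) (use c in blast)
qed

lemma bound_all: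
  assumes hc: "continuous_on Qcube h" and DQ: "D \<subseteq> Qopen" and cl: "Qcube \<subseteq> closure D"
    and bd: "\<forall>d \<in> D. \<forall>n. \<bar>(d - h d) n\<bar> \<le> \<bar>z n\<bar>"
    and x: "x \<in> Qcube"
  shows "\<bar>x n - h x n\<bar> \<le> \<bar>(z::nat\<Rightarrow>real) n\<bar>"
proof -
  have "D \<subseteq> Qcube" using DQ by (auto simp: Qopen_def Qcube_def less_imp_le)
  hence "closure D \<subseteq> Qcube" using closed_Qcube closure_minimal by blast
  with cl have eq: "closure D = Qcube" by auto
  have c1: "continuous_on Qcube (\<lambda>y::nat\<Rightarrow>real. y n)"
    by (rule continuous_on_subset[OF continuous_on_product_coordinates]) simp
  have c2: "continuous_on Qcube (\<lambda>y. h y n)"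
    using continuous_on_product_then_coordinatewise[OF hc] .
  have c: "continuous_on (closure D) (\<lambda>y. \<bar>y n - h y n\<bar>)"
    unfolding eq by (intro continuous_on_rabs continuous_on_diff c1 c2)
  have "(\<lambda>y. \<bar>y n - h y n\<bar>) ` closure D \<subseteq> {..\<bar>z n\<bar>}"
    by (rule image_closure_subset[OF c]) (use bd in auto)
  thus ?thesis using x eq by auto
qed

lemma map_K:
  assumes zK: "z \<in> K_F F" and filt: "is_filter_on_nat F"
    and into: "\<And>x. x \<in> Qcube \<Longrightarrow> k x \<in> Qcube"
    and b: "\<And>x n. x \<in> Qcube \<Longrightarrow> \<bar>x n - k x n\<bar> \<le> \<bar>z n\<bar>"
    and x: "x \<in> K_F F"
  shows "k x \<in> K_F F"
proof -
  have xQ: "x \<in> Qcube" using x by (auto simp: K_F_def)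
  have "{n. \<bar>k x n\<bar> < (1/2) ^ m} \<in> F" for m
  proof -
    have A: "{n. \<bar>x n\<bar> < (1/2) ^ Suc m} \<in> F" "{n. \<bar>z n\<bar> < (1/2) ^ Suc m} \<in> F"
    proof -
      have P1: "\<forall>m. {n. \<bar>x n\<bar> < (1/2) ^ m} \<in> F" and P2: "\<forall>m. {n. \<bar>z n\<bar> < (1/2) ^ m} \<in> F"
        using x zK unfolding K_F_def by auto
      show "{n. \<bar>x n\<bar> < (1/2) ^ Suc m} \<in> F" using P1 by (rule spec)
      show "{n. \<bar>z n\<bar> < (1/2) ^ Suc m} \<in> F" using P2 by (rule spec)
    qed
    have "{n. \<bar>x n\<bar> < (1/2) ^ Suc m} \<inter> {n. \<bar>z n\<bar> < (1/2) ^ Suc m} \<subseteq> {n. \<bar>k x n\<bar> < (1/2) ^ m}"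
    proof
      fix n assume "n \<in> {n. \<bar>x n\<bar> < (1/2) ^ Suc m} \<inter> {n. \<bar>z n\<bar> < (1/2) ^ Suc m}"
      hence "\<bar>x n\<bar> < (1/2) ^ Suc m" "\<bar>z n\<bar> < (1/2) ^ Suc m" by auto
      moreover have "\<bar>x n - k x n\<bar> \<le> \<bar>z n\<bar>" using b xQ by blast
      moreover have "(1/2::real) ^ Suc m + (1/2) ^ Suc m = (1/2) ^ m" by simp
      ultimately have "\<bar>k x n\<bar> < (1/2) ^ m" by linarith
      thus "n \<in> {n. \<bar>k x n\<bar> < (1/2) ^ m}" by simp
    qed
    thus ?thesis using A filt unfolding is_filter_on_nat_def by blast
  qed
  thus ?thesis using into xQ by (auto simp: K_F_def)
qed

theorem mainTheorem11:
  fixes F :: "nat set set" and h :: "(nat \<Rightarrow> real) \<Rightarrow> (nat \<Rightarrow> real)"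
    and D :: "(nat \<Rightarrow> real) set"
  assumes "free_filter F"
    and "\<exists>g. homeomorphism Qcube Qcube h g"
    and "D \<subseteq> Qopen" and "countable D" and "Qcube \<subseteq> closure D"
    and "\<exists>z \<in> C_F F. \<forall>d \<in> D. \<forall>n. \<bar>(d - h d) n\<bar> \<le> \<bar>z n\<bar>"
  shows "h ` K_F F = K_F F"
proof -
  obtain g where hg: "homeomorphism Qcube Qcube h g" using assms(2) by blast
  obtain z where z: "z \<in> C_F F" and bd: "\<forall>d \<in> D. \<forall>n. \<bar>(d - h d) n\<bar> \<le> \<bar>z n\<bar>"
    using assms(6) by blast
  have zK: "z \<in> K_F F" using z by (simp add: C_F_def)
  have filt: "is_filter_on_nat F" using assms(1) by (simp add: free_filter_def)
  have hc: "continuous_on Qcube h" and hQ: "\<And>x. x \<in> Qcube \<Longrightarrow> h x \<in> Qcube"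
    and gQ: "\<And>x. x \<in> Qcube \<Longrightarrow> g x \<in> Qcube" and hg1: "\<And>y. y \<in> Qcube \<Longrightarrow> h (g y) = y"
    using hg unfolding homeomorphism_def by auto
  have b: "\<bar>x n - h x n\<bar> \<le> \<bar>z n\<bar>" if "x \<in> Qcube" for x n
    using bound_all[OF hc assms(3) assms(5) bd that] .
  have b2: "\<bar>y n - g y n\<bar> \<le> \<bar>z n\<bar>" if "y \<in> Qcube" for y n
    using b[OF gQ[OF that], of n] hg1[OF that] by auto
  have KQ: "K_F F \<subseteq> Qcube" by (auto simp: K_F_def)
  show ?thesis
  proof
    show "h ` K_F F \<subseteq> K_F F" using map_K[OF zK filt hQ b] by auto
  next
    show "K_F F \<subseteq> h ` K_F F"
    proof
      fix y assume y: "y \<in> K_F F"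
      have "g y \<in> K_F F" using map_K[OF zK filt gQ b2 y] .
      moreover have "h (g y) = y" using hg1 y KQ by auto
      ultimately show "y \<in> h ` K_F F" by (metis imageI)
    qed
  qed
qed

end
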